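(* For every integer $l\ge1$, let $m=5l+3$, $L_1=[2l+1]$, $L_2=\{2l+2,\dots,4l+2\}$, $L_3=\{4l+3,\dots,5l+3\}$, and let $O_{L_s}$, $E_{L_s}$ denote the sets of odd and even elements of $L_s$. Let $\mathcal{I}_7(l)$ be the instance on $[m]$ with $A_i=E_{L_1}\cup(L_2\setminus\{i+2l+1\})\cup L_3$ for $i\in O_{L_1}$; $A_i=O_{L_2}\cup(L_1\setminus\{i\})\cup L_3$ for $i\in E_{L_1}$; $A_i=O_{L_2}\cup(L_1\setminus\{i-(2l+1)\})\cup L_3$ for $i\in E_{L_2}$; $A_i=E_{L_1}\cup(L_2\setminus\{i\})\cup L_3$ for $i\in O_{L_2}$; $A_i=\{2(i-4l-2)-1,\ 2(i-3l-2)\}$ for $i\in L_3$. Then the UMCD coding scheme is optimal for $\mathcal{I}_7(l)$, i.e. $\beta(\mathcal{I}_7(l))=\beta_{\text{UMCD}}(\mathcal{I}_7(l))$.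
   Context: Index coding: messages $x_i\in\mathbb{F}_q^t$; receiver $i$ wants $x_i$ and knows $x_j$, $j\in A_i\subseteq[m]\setminus\{i\}$. A $(t,r)$ index code is an encoder $\phi:\mathbb{F}_q^{mt}\to\mathbb{F}_q^r$ with decoders $\psi_i$ satisfying $\psi_i(\phi(x),(x_j)_{j\in A_i})=x_i$ for all messages and $i$; $\beta(\mathcal{I})$ is the infimum of $r/t$ over all $t$ and codes (over finite fields). $B_i=[m]\setminus(A_i\cup\{i\})$. For a $0/1$ matrix $\boldsymbol{G}$, $\boldsymbol{G}_{[k]}^L$ is the submatrix of the first $k$ rows and columns $L$; $\mathrm{mcm}$ is the maximum number of $1$-entries in distinct rows and columns (0 if no columns). UMCD algorithm: $N=[m]$, $k=0$; while $N\ne\emptyset$: $k\leftarrow k+1$; pick $w\in N$ minimizing $|A_w|$ over $N$ (arbitrary tie-breaking); row $k$ of $\boldsymbol{G}$ is the indicator of $\{w\}\cup A_w$; remove $w$ from $N$; remove every $i\in N$ with $\mathrm{mcm}(\boldsymbol{G}_{[k]}^{\{i\}\cup B_i})=\mathrm{mcm}(\boldsymbol{G}_{[k]}^{B_i})+1$; output $\beta_{\text{UMCD}}=k$. *)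

theory Defs
  imports "HOL-Algebra.Ring" "HOL-Library.FuncSet" Complex_Main
begin

text \<open>Finite fields are HOL-Algebra fields with finite carrier (carrier inside nat;
  every finite field is isomorphic to such one).\<close>

definition messages :: "nat ring \<Rightarrow> nat \<Rightarrow> nat \<Rightarrow> (nat \<Rightarrow> nat \<Rightarrow> nat) set" where
  "messages R m t = PiE {1..m} (\<lambda>_. PiE {..<t} (\<lambda>_. carrier R))"

definition codewords :: "nat ring \<Rightarrow> nat \<Rightarrow> (nat \<Rightarrow> nat) set" where
  "codewords R r = PiE {..<r} (\<lambda>_. carrier R)"

definition is_index_code ::
  "nat ring \<Rightarrow> nat \<Rightarrow> (nat \<Rightarrow> nat set) \<Rightarrow> nat \<Rightarrow> nat \<Rightarrow> ((nat \<Rightarrow> nat \<Rightarrow> nat) \<Rightarrow> (nat \<Rightarrow> nat)) \<Rightarrow> bool" where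
  "is_index_code R m A t r \<phi> \<longleftrightarrow>
     \<phi> \<in> messages R m t \<rightarrow> codewords R r \<and>
     (\<forall>i\<in>{1..m}. \<exists>\<psi>. \<forall>x\<in>messages R m t. \<psi> (\<phi> x) (restrict x (A i)) = x i)"

definition beta :: "nat \<Rightarrow> (nat \<Rightarrow> nat set) \<Rightarrow> real" where
  "beta m A = Inf {real r / real t | r t. \<exists>(R::nat ring) \<phi>.
      field R \<and> finite (carrier R) \<and> t \<ge> 1 \<and> is_index_code R m A t r \<phi>}"

definition Bset :: "nat \<Rightarrow> (nat \<Rightarrow> nat set) \<Rightarrow> nat \<Rightarrow> nat set" where
  "Bset m A i = {1..m} - (A i \<union> {i})"

text \<open>Rows of G are stored as a list of sets (row s = indicator of rows ! s).
  mcm rows L = maximum number of 1-entries of the submatrix (all rows, columns L)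
  lying in pairwise distinct rows and columns.\<close>

definition mcm :: "nat set list \<Rightarrow> nat set \<Rightarrow> nat" where
  "mcm rows L = Max {card M | M. M \<subseteq> {(s, c). s < length rows \<and> c \<in> L \<and> c \<in> rows ! s}
                                 \<and> inj_on fst M \<and> inj_on snd M}"

text \<open>Reachable states (N, rows) of the UMCD algorithm, for any tie-breaking.\<close>

inductive umcd_reach :: "nat \<Rightarrow> (nat \<Rightarrow> nat set) \<Rightarrow> nat set \<Rightarrow> nat set list \<Rightarrow> bool"
  for m :: nat and A :: "nat \<Rightarrow> nat set" where
  init: "umcd_reach m A {1..m} []"
| step: "umcd_reach m A N rows \<Longrightarrow> N \<noteq> {} \<Longrightarrow> w \<in> N \<Longrightarrow>
         (\<forall>v\<in>N. card (A w) \<le> card (A v)) \<Longrightarrow>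
         rows' = rows @ [insert w (A w)] \<Longrightarrow>
         N' = {i \<in> N - {w}. mcm rows' (insert i (Bset m A i)) \<noteq> mcm rows' (Bset m A i) + 1} \<Longrightarrow>
         umcd_reach m A N' rows'"

definition umcd_output :: "nat \<Rightarrow> (nat \<Rightarrow> nat set) \<Rightarrow> nat \<Rightarrow> bool" where
  "umcd_output m A k \<longleftrightarrow> (\<exists>rows. umcd_reach m A {} rows \<and> k = length rows)"

definition odds :: "nat set \<Rightarrow> nat set" where "odds S = {i \<in> S. odd i}"
definition evens :: "nat set \<Rightarrow> nat set" where "evens S = {i \<in> S. even i}"

definition I7_m :: "nat \<Rightarrow> nat" where "I7_m l = 5*l + 3"

definition I7_A :: "nat \<Rightarrow> nat \<Rightarrow> nat set" where
  "I7_A l i =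
    (let L1 = {1..2*l+1}; L2 = {2*l+2..4*l+2}; L3 = {4*l+3..5*l+3} in
     if i \<in> odds L1 then evens L1 \<union> (L2 - {i + 2*l + 1}) \<union> L3
     else if i \<in> evens L1 then odds L2 \<union> (L1 - {i}) \<union> L3
     else if i \<in> evens L2 then odds L2 \<union> (L1 - {i - (2*l + 1)}) \<union> L3
     else if i \<in> odds L2 then evens L1 \<union> (L2 - {i}) \<union> L3
     else if i \<in> L3 then {2*(i - 4*l - 2) - 1, 2*(i - 3*l - 2)}
     else {})"

end

theory Submission
  imports Defs
begin

definition GF2 :: "nat ring" where
  "GF2 = \<lparr>carrier = {0,1}, monoid.mult = (\<lambda>x y. x*y), one = 1, zero = 0, add = (\<lambda>x y. (x+y) mod 2)\<rparr>"

lemma GF2_field: "field GF2"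
proof -
  have ag: "abelian_group GF2"
    by (rule abelian_groupI) (auto simp: GF2_def)
  have cm: "comm_monoid GF2"
    by (rule comm_monoidI) (auto simp: GF2_def)
  have cr: "cring GF2"
    by (rule cringI[OF ag cm]) (auto simp: GF2_def)
  have dom: "domain GF2"
    by (rule domain.intro[OF cr]) (unfold_locales, auto simp: GF2_def)
  show ?thesis
  proof (rule field.intro[OF dom], unfold_locales)
    show "Units GF2 = carrier GF2 - {\<zero>\<^bsub>GF2\<^esub>}"
      by (auto simp: GF2_def Units_def)
  qed
qed

definition aa :: "nat \<Rightarrow> nat \<Rightarrow> nat" where "aa l j = 2*(j-4*l-2)-1"
definition bb :: "nat \<Rightarrow> nat \<Rightarrow> nat" where "bb l j = 2*(j-3*l-2)"

lemma A_oL1: "odd i \<Longrightarrow> 1 \<le> i \<Longrightarrow> i \<le> 2*l+1 \<Longrightarrow> c \<in> I7_A l i \<longleftrightarrow>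
  ((even c \<and> 1 \<le> c \<and> c \<le> 2*l+1) \<or> (2*l+2 \<le> c \<and> c \<le> 4*l+2 \<and> c \<noteq> i+2*l+1) \<or> (4*l+3 \<le> c \<and> c \<le> 5*l+3))"
  by (auto simp: I7_A_def odds_def evens_def Let_def)

lemma A_eL1: "even i \<Longrightarrow> 1 \<le> i \<Longrightarrow> i \<le> 2*l+1 \<Longrightarrow> c \<in> I7_A l i \<longleftrightarrow>
  ((odd c \<and> 2*l+2 \<le> c \<and> c \<le> 4*l+2) \<or> (1 \<le> c \<and> c \<le> 2*l+1 \<and> c \<noteq> i) \<or> (4*l+3 \<le> c \<and> c \<le> 5*l+3))"
  by (auto simp: I7_A_def odds_def evens_def Let_def)

lemma A_eL2: "even i \<Longrightarrow> 2*l+2 \<le> i \<Longrightarrow> i \<le> 4*l+2 \<Longrightarrow> c \<in> I7_A l i \<longleftrightarrow>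
  ((odd c \<and> 2*l+2 \<le> c \<and> c \<le> 4*l+2) \<or> (1 \<le> c \<and> c \<le> 2*l+1 \<and> c \<noteq> i-(2*l+1)) \<or> (4*l+3 \<le> c \<and> c \<le> 5*l+3))"
  by (auto simp: I7_A_def odds_def evens_def Let_def)

lemma A_oL2: "odd i \<Longrightarrow> 2*l+2 \<le> i \<Longrightarrow> i \<le> 4*l+2 \<Longrightarrow> c \<in> I7_A l i \<longleftrightarrow>
  ((even c \<and> 1 \<le> c \<and> c \<le> 2*l+1) \<or> (2*l+2 \<le> c \<and> c \<le> 4*l+2 \<and> c \<noteq> i) \<or> (4*l+3 \<le> c \<and> c \<le> 5*l+3))"
  by (auto simp: I7_A_def odds_def evens_def Let_def)

lemma A_L3: "4*l+3 \<le> i \<Longrightarrow> i \<le> 5*l+3 \<Longrightarrow> I7_A l i = {aa l i, bb l i}"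
  by (auto simp: I7_A_def odds_def evens_def Let_def aa_def bb_def)

lemma mcm_set_bound:
  assumes "M \<subseteq> {(s, c). s < length rows \<and> c \<in> L \<and> c \<in> rows ! s}" "inj_on fst M"
  shows "card M \<le> length rows"
proof -
  have "card M = card (fst ` M)" using assms(2) by (simp add: card_image)
  also have "\<dots> \<le> card {..<length rows}" by (rule card_mono) (use assms(1) in auto)
  finally show ?thesis by simp
qed

lemma mcm_set_bound2:
  assumes "M \<subseteq> {(s, c). s < length rows \<and> c \<in> L \<and> c \<in> rows ! s}" "inj_on snd M" "finite L"
  shows "card M \<le> card L"
proof -
  have "card M = card (snd ` M)" using assms(2) by (simp add: card_image)
  also have "\<dots> \<le> card L" by (rule card_mono) (use assms in auto)
  finally show ?thesis by simp
qed

lemma mcm_fin: "finite {card M | M. M \<subseteq> {(s, c). s < length rows \<and> c \<in> L \<and> c \<in> rows ! s}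
                                 \<and> inj_on fst M \<and> inj_on snd M}"
  by (rule finite_subset[of _ "{..length rows}"]) (use mcm_set_bound[of _ rows L] in auto)

lemma mcm_le_len: "mcm rows L \<le> length rows"
  unfolding mcm_def
  by (rule Max.boundedI[OF mcm_fin]) (use mcm_set_bound[of _ rows L] in blast)+

lemma mcm_le_card: assumes "finite L" shows "mcm rows L \<le> card L"
  unfolding mcm_def
proof (rule Max.boundedI[OF mcm_fin])
  show "{card M |M. M \<subseteq> {(s, c). s < length rows \<and> c \<in> L \<and> c \<in> rows ! s} \<and> inj_on fst M \<and> inj_on snd M} \<noteq> {}"
    by blast
next
  fix a assume "a \<in> {card M |M. M \<subseteq> {(s, c). s < length rows \<and> c \<in> L \<and> c \<in> rows ! s} \<and> inj_on fst M \<and> inj_on snd M}"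
  then obtain M where "a = card M" "M \<subseteq> {(s, c). s < length rows \<and> c \<in> L \<and> c \<in> rows ! s}" "inj_on snd M" by blast
  then show "a \<le> card L" using mcm_set_bound2[of M rows L] assms by simp
qed

lemma mcm_ge:
  assumes f: "\<And>s. s < length rows \<Longrightarrow> f s \<in> L \<and> f s \<in> rows ! s"
    and inj: "inj_on f {..<length rows}"
  shows "length rows \<le> mcm rows L"
proof -
  define M where "M = (\<lambda>s. (s, f s)) ` {..<length rows}"
  have c: "card M = length rows" unfolding M_def by (subst card_image) (auto intro: inj_onI)
  have 1: "M \<subseteq> {(s, c). s < length rows \<and> c \<in> L \<and> c \<in> rows ! s}" unfolding M_def using f by auto
  have 2: "inj_on fst M" unfolding M_def by (rule inj_onI) auto
  have 3: "inj_on snd M"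
  proof (rule inj_onI)
    fix x y assume "x \<in> M" "y \<in> M" "snd x = snd y"
    then obtain s1 s2 where "s1 < length rows" "s2 < length rows" "x = (s1, f s1)" "y = (s2, f s2)"
      unfolding M_def by blast
    then show "x = y" using inj \<open>snd x = snd y\<close> by (simp add: inj_on_def)
  qed
  have "card M \<in> {card M |M. M \<subseteq> {(s, c). s < length rows \<and> c \<in> L \<and> c \<in> rows ! s} \<and> inj_on fst M \<and> inj_on snd M}"
    using 1 2 3 by blast
  then have "card M \<le> mcm rows L" unfolding mcm_def by (rule Max_ge[OF mcm_fin])
  then show ?thesis using c by simp
qed

abbreviation B where "B l i \<equiv> Bset (I7_m l) (I7_A l) i"

lemma B_oL1: "odd i \<Longrightarrow> 1 \<le> i \<Longrightarrow> i \<le> 2*l+1 \<Longrightarrow> c \<in> B l i \<longleftrightarrow>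
  ((odd c \<and> 1 \<le> c \<and> c \<le> 2*l+1 \<and> c \<noteq> i) \<or> c = i+2*l+1)"
  unfolding Bset_def I7_m_def using A_oL1[of i l c] by auto

lemma B_eL1: "even i \<Longrightarrow> 1 \<le> i \<Longrightarrow> i \<le> 2*l+1 \<Longrightarrow> c \<in> B l i \<longleftrightarrow>
  (even c \<and> 2*l+2 \<le> c \<and> c \<le> 4*l+2)"
  unfolding Bset_def I7_m_def using A_eL1[of i l c] by auto

lemma B_eL2: "even i \<Longrightarrow> 2*l+2 \<le> i \<Longrightarrow> i \<le> 4*l+2 \<Longrightarrow> c \<in> B l i \<longleftrightarrow>
  ((even c \<and> 2*l+2 \<le> c \<and> c \<le> 4*l+2 \<and> c \<noteq> i) \<or> c = i-(2*l+1))"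
  unfolding Bset_def I7_m_def using A_eL2[of i l c] by auto

lemma B_oL2: "odd i \<Longrightarrow> 2*l+2 \<le> i \<Longrightarrow> i \<le> 4*l+2 \<Longrightarrow> c \<in> B l i \<longleftrightarrow>
  (odd c \<and> 1 \<le> c \<and> c \<le> 2*l+1)"
  unfolding Bset_def I7_m_def using A_oL2[of i l c] by auto

lemma B_L3: "4*l+3 \<le> i \<Longrightarrow> i \<le> 5*l+3 \<Longrightarrow> c \<in> B l i \<longleftrightarrow>
  (1 \<le> c \<and> c \<le> 5*l+3 \<and> c \<noteq> i \<and> c \<noteq> aa l i \<and> c \<noteq> bb l i)"
  unfolding Bset_def I7_m_def using A_L3[of l i] by auto

lemma aa_eq: "4*l+3 \<le> j \<Longrightarrow> aa l j = 2*(j-(4*l+3))+1"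
  unfolding aa_def by (simp add: algebra_simps)
lemma bb_eq: "4*l+3 \<le> j \<Longrightarrow> bb l j = 2*(j-(4*l+3))+2*l+2"
  unfolding bb_def by (simp add: algebra_simps)
lemma aa_props: "4*l+3 \<le> j \<Longrightarrow> j \<le> 5*l+3 \<Longrightarrow> odd (aa l j) \<and> 1 \<le> aa l j \<and> aa l j \<le> 2*l+1"
  by (simp add: aa_eq)
lemma bb_props: "4*l+3 \<le> j \<Longrightarrow> j \<le> 5*l+3 \<Longrightarrow> even (bb l j) \<and> 2*l+2 \<le> bb l j \<and> bb l j \<le> 4*l+2 \<and> bb l j = aa l j + 2*l+1"
  by (simp add: aa_eq bb_eq)
lemma aa_inj: "4*l+3 \<le> j \<Longrightarrow> 4*l+3 \<le> j' \<Longrightarrow> aa l j = aa l j' \<Longrightarrow> j = j'"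
  by (simp add: aa_eq)
lemma bb_inj: "4*l+3 \<le> j \<Longrightarrow> 4*l+3 \<le> j' \<Longrightarrow> bb l j = bb l j' \<Longrightarrow> j = j'"
  by (simp add: bb_eq)

lemma L12_cases:
  fixes i l :: nat
  assumes "1 \<le> i" "i \<le> 4*l+2"
  obtains "odd i" "1 \<le> i" "i \<le> 2*l+1" | "even i" "1 \<le> i" "i \<le> 2*l+1"
    | "even i" "2*l+2 \<le> i" "i \<le> 4*l+2" | "odd i" "2*l+2 \<le> i" "i \<le> 4*l+2"
  using assms by linarith

definition gcol :: "nat \<Rightarrow> nat \<Rightarrow> nat \<Rightarrow> nat" where
  "gcol l i j = (if aa l j \<in> B l i then aa l j else if bb l j \<in> B l i then bb l j else j)"

lemma G1: assumes "1 \<le> i" "i \<le> 5*l+3" "4*l+3 \<le> j" "j \<le> 5*l+3" "j \<noteq> i"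
  shows "gcol l i j \<in> B l i"
proof -
  note a = aa_props[OF assms(3,4)] and b = bb_props[OF assms(3,4)]
  show ?thesis
  proof (cases "i \<le> 4*l+2")
    case True
    from L12_cases[OF assms(1) True] show ?thesis
    proof cases
      case 1 then show ?thesis unfolding gcol_def using 1 a b B_oL1[of i l "aa l j"] B_oL1[of i l "bb l j"] by auto
    next
      case 2 then show ?thesis unfolding gcol_def using 2 a b B_eL1[of i l "aa l j"] B_eL1[of i l "bb l j"] by auto
    next
      case 3 then show ?thesis unfolding gcol_def using 3 a b B_eL2[of i l "aa l j"] B_eL2[of i l "bb l j"] by auto
    next
      case 4 then show ?thesis unfolding gcol_def using 4 a b B_oL2[of i l "aa l j"] B_oL2[of i l "bb l j"] by auto
    qed
  next
    case False
    then have i3: "4*l+3 \<le> i" by simp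
    have "j \<in> B l i" using aa_props[OF i3 assms(2)] bb_props[OF i3 assms(2)] assms B_L3[OF i3 assms(2), of j] by auto
    moreover have "aa l j \<notin> B l i \<and> bb l j \<notin> B l i \<or> gcol l i j \<in> B l i" unfolding gcol_def by auto
    ultimately show ?thesis unfolding gcol_def by auto
  qed
qed

lemma G2: assumes "4*l+3 \<le> j" "j \<le> 5*l+3" "4*l+3 \<le> j'" "j' \<le> 5*l+3" "gcol l i j = gcol l i j'"
  shows "j = j'"
proof -
  note a = aa_props[OF assms(1,2)] and b = bb_props[OF assms(1,2)]
  note a' = aa_props[OF assms(3,4)] and b' = bb_props[OF assms(3,4)]
  have c1: "gcol l i j = aa l j \<or> gcol l i j = bb l j \<or> gcol l i j = j" unfolding gcol_def by auto
  have c2: "gcol l i j' = aa l j' \<or> gcol l i j' = bb l j' \<or> gcol l i j' = j'" unfolding gcol_def by auto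
  from c1 c2 assms(5) show ?thesis
  proof (elim disjE)
  qed (use aa_inj[OF assms(1,3)] bb_inj[OF assms(1,3)] a b a' b' assms in linarith)+
qed

definition pp :: "nat \<Rightarrow> nat \<Rightarrow> nat" where
  "pp l i = (if odd i \<and> i \<le> 2*l+1 then i+2*l+1 else if even i \<and> 2*l+2 \<le> i then i-(2*l+1) else i)"

lemma pp_simps: fixes i l :: nat shows
  "odd i \<Longrightarrow> i \<le> 2*l+1 \<Longrightarrow> pp l i = i+2*l+1"
  "even i \<Longrightarrow> i \<le> 2*l+1 \<Longrightarrow> pp l i = i"
  "even i \<Longrightarrow> 2*l+2 \<le> i \<Longrightarrow> pp l i = i-(2*l+1)"
  "odd i \<Longrightarrow> 2*l+2 \<le> i \<Longrightarrow> pp l i = i"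
  by (auto simp: pp_def)

lemma H1: assumes "1 \<le> i" "i \<le> 4*l+2" "1 \<le> w" "w \<le> 4*l+2" "i \<noteq> w"
  shows "i \<in> insert w (I7_A l w) \<or> pp l i \<in> insert w (I7_A l w)"
proof -
  from L12_cases[OF assms(1,2)] show ?thesis
  proof cases
   case 1
    note i1 = this
    from L12_cases[OF assms(3,4)] show ?thesis
    proof cases
       case 1 then show ?thesis using assms i1 A_oL1[of w l i] A_oL1[of w l "pp l i"] pp_simps[of i l] by auto
      next case 2 then show ?thesis using assms i1 A_eL1[of w l i] A_eL1[of w l "pp l i"] pp_simps[of i l] by auto
      next case 3 then show ?thesis using assms i1 A_eL2[of w l i] A_eL2[of w l "pp l i"] pp_simps[of i l] by auto
      next case 4 then show ?thesis using assms i1 A_oL2[of w l i] A_oL2[of w l "pp l i"] pp_simps[of i l] by auto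
    qed
  next case 2
    note i2 = this
    from L12_cases[OF assms(3,4)] show ?thesis
    proof cases
       case 1 then show ?thesis using assms i2 A_oL1[of w l i] A_oL1[of w l "pp l i"] pp_simps[of i l] by auto
      next case 2 then show ?thesis using assms i2 A_eL1[of w l i] A_eL1[of w l "pp l i"] pp_simps[of i l] by auto
      next case 3 then show ?thesis using assms i2 A_eL2[of w l i] A_eL2[of w l "pp l i"] pp_simps[of i l] by auto
      next case 4 then show ?thesis using assms i2 A_oL2[of w l i] A_oL2[of w l "pp l i"] pp_simps[of i l] by auto
    qed
  next case 3
    note i3 = this
    from L12_cases[OF assms(3,4)] show ?thesis
    proof cases
       case 1 then show ?thesis using assms i3 A_oL1[of w l i] A_oL1[of w l "pp l i"] pp_simps[of i l] by auto
      next case 2 then show ?thesis using assms i3 A_eL1[of w l i] A_eL1[of w l "pp l i"] pp_simps[of i l] by auto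
      next case 3 then show ?thesis using assms i3 A_eL2[of w l i] A_eL2[of w l "pp l i"] pp_simps[of i l] by auto
      next case 4 then show ?thesis using assms i3 A_oL2[of w l i] A_oL2[of w l "pp l i"] pp_simps[of i l] by auto
    qed
  next case 4
    note i4 = this
    from L12_cases[OF assms(3,4)] show ?thesis
    proof cases
       case 1 then show ?thesis using assms i4 A_oL1[of w l i] A_oL1[of w l "pp l i"] pp_simps[of i l] by auto
      next case 2 then show ?thesis using assms i4 A_eL1[of w l i] A_eL1[of w l "pp l i"] pp_simps[of i l] by auto
      next case 3 then show ?thesis using assms i4 A_eL2[of w l i] A_eL2[of w l "pp l i"] pp_simps[of i l] by auto
      next case 4 then show ?thesis using assms i4 A_oL2[of w l i] A_oL2[of w l "pp l i"] pp_simps[of i l] by auto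
    qed
  qed
qed
lemma pp_U: assumes "1 \<le> i" "i \<le> 4*l+2" shows "pp l i \<in> insert i (B l i)"
proof -
  from L12_cases[OF assms] show ?thesis
  proof cases
    case 1 then show ?thesis unfolding pp_def using B_oL1[of i l "pp l i"] by (auto simp: pp_def)
  next
    case 2 then show ?thesis unfolding pp_def by auto
  next
    case 3 then show ?thesis unfolding pp_def using B_eL2[of i l "i - (2*l+1)"] by auto
  next
    case 4 then show ?thesis unfolding pp_def by auto
  qed
qed

lemma H2: assumes "1 \<le> i" "i \<le> 4*l+2" "4*l+3 \<le> j" "j \<le> 5*l+3" "cw = i \<or> cw = pp l i"
  shows "(aa l j \<in> insert i (B l i) \<and> aa l j \<noteq> cw) \<or> (bb l j \<in> insert i (B l i) \<and> bb l j \<noteq> cw)"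
proof -
  note a = aa_props[OF assms(3,4)] and b = bb_props[OF assms(3,4)]
  from L12_cases[OF assms(1,2)] show ?thesis
  proof cases
    case 1 then show ?thesis using assms a b B_oL1[of i l "aa l j"] B_oL1[of i l "bb l j"] unfolding pp_def by auto
  next
    case 2 then show ?thesis using assms a b B_eL1[of i l "aa l j"] B_eL1[of i l "bb l j"] unfolding pp_def by auto
  next
    case 3 then show ?thesis using assms a b B_eL2[of i l "aa l j"] B_eL2[of i l "bb l j"] unfolding pp_def by auto
  next
    case 4 then show ?thesis using assms a b B_oL2[of i l "aa l j"] B_oL2[of i l "bb l j"] unfolding pp_def by auto
  qed
qed

lemma Bpair: assumes "1 \<le> i" "i \<le> 4*l+2" "c \<in> B l i"
  shows "(odd c \<and> 1 \<le> c \<and> c \<le> 2*l+1) \<or> (even c \<and> 2*l+2 \<le> c \<and> c \<le> 4*l+2 \<and> c - (2*l+1) \<notin> B l i)"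
proof -
  from L12_cases[OF assms(1,2)] show ?thesis
  proof cases
    case 1 then show ?thesis using assms B_oL1[of i l c] B_oL1[of i l "c - (2*l+1)"] by auto
  next
    case 2 then show ?thesis using assms B_eL1[of i l c] B_eL1[of i l "c - (2*l+1)"] by auto
  next
    case 3 then show ?thesis using assms B_eL2[of i l c] B_eL2[of i l "c - (2*l+1)"] by auto
  next
    case 4 then show ?thesis using assms B_oL2[of i l c] B_oL2[of i l "c - (2*l+1)"] by auto
  qed
qed

lemma A_out: assumes "\<not> (1 \<le> w \<and> w \<le> 5*l+3)" shows "I7_A l w = {}"
proof -
  have "w = 0 \<or> 5*l+3 < w" using assms by auto
  then show ?thesis unfolding I7_A_def odds_def evens_def Let_def by auto
qed

lemma A_sub: "I7_A l w \<subseteq> {1..5*l+3}"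
proof (cases "1 \<le> w \<and> w \<le> 5*l+3")
  case True
  show ?thesis
  proof (cases "w \<le> 4*l+2")
    case True2: True
    have w1: "1 \<le> w" using True by simp
    from L12_cases[OF w1 True2] show ?thesis
    proof cases
      case 1 then show ?thesis using A_oL1[of w l] by (intro subsetI) (simp, linarith)
    next
      case 2 then show ?thesis using A_eL1[of w l] by (intro subsetI) (simp, linarith)
    next
      case 3 then show ?thesis using A_eL2[of w l] by (intro subsetI) (simp, linarith)
    next
      case 4 then show ?thesis using A_oL2[of w l] by (intro subsetI) (simp, linarith)
    qed
  next
    case False
    then have "4*l+3 \<le> w" by simp
    then show ?thesis using True A_L3[of l w] aa_props[of l w] bb_props[of l w] by auto
  qed
next
  case False
  then show ?thesis using A_out by simp
qed
lemma card_A12: assumes "1 \<le> l" "1 \<le> w" "w \<le> 4*l+2" shows "3 \<le> card (I7_A l w)"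
proof -
  define x where "x = (if even w \<and> w \<le> 2*l+1 then 1 else (2::nat))"
  have "{4*l+3, 4*l+4, x} \<subseteq> I7_A l w"
    using L12_cases[OF assms(2,3)]
  proof cases
    case 1 then show ?thesis using assms A_oL1[of w l "4*l+3"] A_oL1[of w l "4*l+4"] A_oL1[of w l x] unfolding x_def by auto
  next
    case 2 then show ?thesis using assms A_eL1[of w l "4*l+3"] A_eL1[of w l "4*l+4"] A_eL1[of w l x] unfolding x_def by auto
  next
    case 3 moreover have "w - (2*l+1) \<noteq> 2" using 3 by presburger ultimately show ?thesis using assms A_eL2[of w l "4*l+3"] A_eL2[of w l "4*l+4"] A_eL2[of w l x] unfolding x_def by auto
  next
    case 4 then show ?thesis using assms A_oL2[of w l "4*l+3"] A_oL2[of w l "4*l+4"] A_oL2[of w l x] unfolding x_def by auto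
  qed
  moreover have "card {4*l+3, 4*l+4, x} = 3" unfolding x_def by auto
  moreover have "finite (I7_A l w)" using A_sub[of l w] finite_subset by blast
  ultimately show ?thesis by (metis card_mono)
qed


lemma card_A3: assumes "1 \<le> l" "4*l+3 \<le> j" "j \<le> 5*l+3" shows "card (I7_A l j) = 2"
  using A_L3[OF assms(2,3)] aa_props[OF assms(2,3)] bb_props[OF assms(2,3)] by simp

lemma mcm_ge2:
  assumes S: "S \<subseteq> {..<length rows}"
    and f: "\<And>s. s \<in> S \<Longrightarrow> f s \<in> L \<and> f s \<in> rows ! s"
    and inj: "inj_on f S"
  shows "card S \<le> mcm rows L"
proof -
  define M where "M = (\<lambda>s. (s, f s)) ` S"
  have c: "card M = card S" unfolding M_def by (subst card_image) (auto intro: inj_onI)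
  have 1: "M \<subseteq> {(s, c). s < length rows \<and> c \<in> L \<and> c \<in> rows ! s}" unfolding M_def using f S by auto
  have 2: "inj_on fst M" unfolding M_def by (rule inj_onI) auto
  have 3: "inj_on snd M"
  proof (rule inj_onI)
    fix x y assume "x \<in> M" "y \<in> M" "snd x = snd y"
    then obtain s1 s2 where "s1 \<in> S" "s2 \<in> S" "x = (s1, f s1)" "y = (s2, f s2)"
      unfolding M_def by blast
    then show "x = y" using inj \<open>snd x = snd y\<close> by (simp add: inj_on_def)
  qed
  have "card M \<in> {card M |M. M \<subseteq> {(s, c). s < length rows \<and> c \<in> L \<and> c \<in> rows ! s} \<and> inj_on fst M \<and> inj_on snd M}"
    using 1 2 3 by blast
  then have "card M \<le> mcm rows L" unfolding mcm_def by (rule Max_ge[OF mcm_fin])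
  then show ?thesis using c by simp
qed

definition row :: "nat \<Rightarrow> nat \<Rightarrow> nat set" where "row l j = insert j (I7_A l j)"

lemma NR: assumes "distinct js" "set js \<subseteq> {4*l+3..5*l+3}" "1 \<le> i" "i \<le> 5*l+3" "i \<notin> set js"
  shows "mcm (map (row l) js) (insert i (B l i)) \<noteq> mcm (map (row l) js) (B l i) + 1"
proof -
  let ?rows = "map (row l) js"
  have "length ?rows \<le> mcm ?rows (B l i)"
  proof (rule mcm_ge[where f = "\<lambda>s. gcol l i (js!s)"])
    fix s assume "s < length ?rows"
    then have s: "s < length js" by simp
    then have j: "js!s \<in> set js" by simp
    hence j3: "4*l+3 \<le> js!s" "js!s \<le> 5*l+3" using assms(2) by auto
    have ne: "js!s \<noteq> i" using j assms(5) by auto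
    show "gcol l i (js!s) \<in> B l i \<and> gcol l i (js!s) \<in> ?rows ! s"
      using G1[OF assms(3,4) j3 ne] A_L3[OF j3] s by (auto simp: row_def gcol_def)
  next
    show "inj_on (\<lambda>s. gcol l i (js!s)) {..<length ?rows}"
    proof (rule inj_onI)
      fix s1 s2 assume s1: "s1 \<in> {..<length ?rows}" and s2: "s2 \<in> {..<length ?rows}"
        and eq: "gcol l i (js!s1) = gcol l i (js!s2)"
      have "js!s1 \<in> set js" "js!s2 \<in> set js" using s1 s2 by auto
      then have "js!s1 \<in> {4*l+3..5*l+3}" "js!s2 \<in> {4*l+3..5*l+3}" using assms(2) by auto
      then have "js!s1 = js!s2" using G2[OF _ _ _ _ eq] by auto
      then show "s1 = s2" using assms(1) s1 s2 by (simp add: nth_eq_iff_index_eq)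
    qed
  qed
  moreover have "mcm ?rows (insert i (B l i)) \<le> length ?rows" by (rule mcm_le_len)
  ultimately show ?thesis by linarith
qed

lemma B_fin: "finite (B l i)"
  unfolding Bset_def by simp

lemma cardB: assumes "1 \<le> i" "i \<le> 4*l+2" shows "card (B l i) \<le> l+1"
proof -
  let ?g = "\<lambda>j. if aa l j \<in> B l i then aa l j else bb l j"
  have "B l i \<subseteq> ?g ` {4*l+3..5*l+3}"
  proof
    fix c assume c: "c \<in> B l i"
    from Bpair[OF assms c] show "c \<in> ?g ` {4*l+3..5*l+3}"
    proof
      assume h: "odd c \<and> 1 \<le> c \<and> c \<le> 2*l+1"
      define j where "j = (c - 1) div 2 + (4*l+3)"
      have j3: "4*l+3 \<le> j" "j \<le> 5*l+3" unfolding j_def using h by auto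
      have "aa l j = c" using aa_eq[OF j3(1)] h unfolding j_def by simp
      then have "?g j = c" using c by simp
      then show ?thesis using j3 by force
    next
      assume h: "even c \<and> 2*l+2 \<le> c \<and> c \<le> 4*l+2 \<and> c - (2*l+1) \<notin> B l i"
      define j where "j = (c - (2*l+2)) div 2 + (4*l+3)"
      have j3: "4*l+3 \<le> j" "j \<le> 5*l+3" unfolding j_def using h by auto
      have "bb l j = c" using bb_eq[OF j3(1)] h unfolding j_def by auto
      moreover have "aa l j = c - (2*l+1)" using bb_props[OF j3] \<open>bb l j = c\<close> by simp
      ultimately have "?g j = c" using h by simp
      then show ?thesis using j3 by force
    qed
  qed
  then have "card (B l i) \<le> card (?g ` {4*l+3..5*l+3})" by (rule card_mono[OF finite_imageI[OF finite_atLeastAtMost]])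
  also have "\<dots> \<le> card {4*l+3..5*l+3}" by (rule card_image_le) simp
  finally show ?thesis by simp
qed

lemma RM: assumes "distinct js" "set js = {4*l+3..5*l+3}" "1 \<le> i" "i \<le> 4*l+2" "1 \<le> w" "w \<le> 4*l+2" "i \<noteq> w"
  shows "mcm (map (row l) js @ [row l w]) (insert i (B l i)) = mcm (map (row l) js @ [row l w]) (B l i) + 1"
proof -
  let ?rows = "map (row l) js @ [row l w]"
  have lenjs: "length js = l+1" using distinct_card[OF assms(1)] assms(2) by simp
  have len: "length ?rows = l+2" using lenjs by simp
  have js3: "\<And>s. s < length js \<Longrightarrow> 4*l+3 \<le> js!s \<and> js!s \<le> 5*l+3"
  proof -
    fix s assume "s < length js"
    then have "js!s \<in> set js" by simp
    then show "4*l+3 \<le> js!s \<and> js!s \<le> 5*l+3" using assms(2) by auto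
  qed
  have rs: "\<And>s. s < length js \<Longrightarrow> ?rows ! s = row l (js!s)" by (simp add: nth_append)
  have rl: "?rows ! length js = row l w" by (simp add: nth_append)
  have a: "mcm ?rows (B l i) \<le> l+1"
    using mcm_le_card[OF B_fin, of ?rows l i] cardB[OF assms(3,4)] by linarith
  have b: "l+1 \<le> mcm ?rows (B l i)"
  proof -
    have "card {..<length js} \<le> mcm ?rows (B l i)"
    proof (rule mcm_ge2[where f = "\<lambda>s. gcol l i (js!s)"])
      show "{..<length js} \<subseteq> {..<length ?rows}" by auto
    next
      fix s assume "s \<in> {..<length js}"
      then have s: "s < length js" by simp
      have j3: "4*l+3 \<le> js!s" "js!s \<le> 5*l+3" using js3[OF s] by auto
      have ne: "js!s \<noteq> i" using j3 assms(4) by auto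
      show "gcol l i (js!s) \<in> B l i \<and> gcol l i (js!s) \<in> ?rows ! s"
        using G1[OF assms(3) _ j3 ne] assms(4) A_L3[OF j3] rs[OF s] by (auto simp: row_def gcol_def)
    next
      show "inj_on (\<lambda>s. gcol l i (js!s)) {..<length js}"
      proof (rule inj_onI)
        fix s1 s2 assume s1: "s1 \<in> {..<length js}" and s2: "s2 \<in> {..<length js}"
          and eq: "gcol l i (js!s1) = gcol l i (js!s2)"
        have "js!s1 = js!s2" using G2[OF _ _ _ _ eq] js3 s1 s2 by auto
        then show "s1 = s2" using assms(1) s1 s2 by (simp add: nth_eq_iff_index_eq)
      qed
    qed
    then show ?thesis using lenjs by simp
  qed
  define cw where "cw = (if i \<in> row l w then i else pp l i)"
  have cwU: "cw \<in> insert i (B l i)" unfolding cw_def using pp_U[OF assms(3,4)] by auto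
  have cwr: "cw \<in> row l w" unfolding cw_def row_def using H1[OF assms(3-7)] by (auto simp: row_def)
  have cwor: "cw = i \<or> cw = pp l i" unfolding cw_def by auto
  define hc where "hc = (\<lambda>j. if aa l j \<in> insert i (B l i) - {cw} then aa l j else bb l j)"
  have hcU: "\<And>j. 4*l+3 \<le> j \<Longrightarrow> j \<le> 5*l+3 \<Longrightarrow> hc j \<in> insert i (B l i) - {cw}"
    unfolding hc_def using H2[OF assms(3,4) _ _ cwor] by auto
  have c: "l+2 \<le> mcm ?rows (insert i (B l i))"
  proof -
    have "length ?rows \<le> mcm ?rows (insert i (B l i))"
    proof (rule mcm_ge[where f = "\<lambda>s. if s < length js then hc (js!s) else cw"])
      fix s assume "s < length ?rows"
      then have "s < length js \<or> s = length js" by auto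
      then show "(if s < length js then hc (js!s) else cw) \<in> insert i (B l i) \<and>
                 (if s < length js then hc (js!s) else cw) \<in> ?rows ! s"
      proof
        assume s: "s < length js"
        have j3: "4*l+3 \<le> js!s" "js!s \<le> 5*l+3" using js3[OF s] by auto
        show ?thesis using hcU[OF j3] s rs[OF s] A_L3[OF j3] unfolding hc_def row_def by auto
      next
        assume s: "s = length js"
        show ?thesis using s rl cwU cwr by auto
      qed
    next
      show "inj_on (\<lambda>s. if s < length js then hc (js!s) else cw) {..<length ?rows}"
      proof (rule inj_onI)
        fix s1 s2 assume s1: "s1 \<in> {..<length ?rows}" and s2: "s2 \<in> {..<length ?rows}"
          and eq: "(if s1 < length js then hc (js!s1) else cw) = (if s2 < length js then hc (js!s2) else cw)"
        have s1': "s1 < length js \<or> s1 = length js" and s2': "s2 < length js \<or> s2 = length js" using s1 s2 by auto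
        show "s1 = s2"
        proof (cases "s1 < length js")
          case T1: True
          have j1: "4*l+3 \<le> js!s1" "js!s1 \<le> 5*l+3" using js3[OF T1] by auto
          show ?thesis
          proof (cases "s2 < length js")
            case T2: True
            have j2: "4*l+3 \<le> js!s2" "js!s2 \<le> 5*l+3" using js3[OF T2] by auto
            have e: "hc (js!s1) = hc (js!s2)" using eq T1 T2 by simp
            have "js!s1 = js!s2"
              using e aa_inj[OF j1(1) j2(1)] bb_inj[OF j1(1) j2(1)] aa_props[OF j1] bb_props[OF j1]
                aa_props[OF j2] bb_props[OF j2] unfolding hc_def by (auto split: if_splits)
            then show ?thesis using assms(1) T1 T2 by (simp add: nth_eq_iff_index_eq)
          next
            case False
            then have "hc (js!s1) = cw" using eq T1 by simp
            then show ?thesis using hcU[OF j1] by auto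
          qed
        next
          case F1: False
          show ?thesis
          proof (cases "s2 < length js")
            case T2: True
            have j2: "4*l+3 \<le> js!s2" "js!s2 \<le> 5*l+3" using js3[OF T2] by auto
            have "hc (js!s2) = cw" using eq T2 F1 by simp
            then show ?thesis using hcU[OF j2] by auto
          next
            case False
            then show ?thesis using F1 s1' s2' by auto
          qed
        qed
      qed
    qed
    then show ?thesis using len by simp
  qed
  have d: "mcm ?rows (insert i (B l i)) \<le> l+2" using mcm_le_len[of ?rows] len by simp
  show ?thesis using a b c d by linarith
qed

lemma inv_reach: assumes "umcd_reach (I7_m l) (I7_A l) N rows" "1 \<le> l"
  shows "(\<exists>js. distinct js \<and> set js \<subseteq> {4*l+3..5*l+3} \<and> rows = map (row l) js \<and> N = {1..5*l+3} - set js)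
         \<or> (N = {} \<and> length rows = l+2)"
  using assms(1)
proof (induction rule: umcd_reach.induct)
  case init
  show ?case by (rule disjI1, rule exI[of _ "[]"]) (simp add: I7_m_def)
next
  case (step N rows w rows' N')
  from step.IH step.hyps(2) obtain js where js: "distinct js" "set js \<subseteq> {4*l+3..5*l+3}"
    "rows = map (row l) js" "N = {1..5*l+3} - set js" by auto
  have w: "1 \<le> w" "w \<le> 5*l+3" "w \<notin> set js" using step.hyps(3) js(4) by auto
  have rows': "rows' = map (row l) (js @ [w])" using step.hyps(5) js(3) by (simp add: row_def)
  show ?case
  proof (cases "{4*l+3..5*l+3} \<subseteq> set js")
    case True
    then have sj: "set js = {4*l+3..5*l+3}" using js(2) by auto
    have "\<not> (4*l+3 \<le> w)" using w sj by auto
    then have w4: "w \<le> 4*l+2" by linarith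
    have "N' = {}"
    proof -
      have "\<And>i. i \<in> N - {w} \<Longrightarrow> mcm rows' (insert i (Bset (I7_m l) (I7_A l) i)) = mcm rows' (Bset (I7_m l) (I7_A l) i) + 1"
      proof -
        fix i assume i: "i \<in> N - {w}"
        then have i': "1 \<le> i" "i \<le> 4*l+2" "i \<noteq> w" using js(4) sj by auto
        show "mcm rows' (insert i (Bset (I7_m l) (I7_A l) i)) = mcm rows' (Bset (I7_m l) (I7_A l) i) + 1"
          using RM[OF js(1) sj i'(1,2) w(1) w4 i'(3)] rows' by simp
      qed
      then show ?thesis using step.hyps(6) by auto
    qed
    moreover have "length rows' = l+2" using rows' distinct_card[OF js(1)] sj by simp
    ultimately show ?thesis by simp
  next
    case False
    then obtain v where v: "v \<in> {4*l+3..5*l+3}" "v \<notin> set js" by (meson subsetI)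
    have vN: "v \<in> N" using v js(4) by auto
    have "card (I7_A l w) \<le> card (I7_A l v)" using step.hyps(4) vN by blast
    also have "\<dots> = 2" using card_A3[OF assms(2), of v] v(1) by simp
    finally have "card (I7_A l w) \<le> 2" .
    then have "\<not> w \<le> 4*l+2" using card_A12[OF assms(2) w(1)] by auto
    then have w3: "4*l+3 \<le> w" by linarith
    have "N' = N - {w}"
    proof -
      have "\<And>i. i \<in> N - {w} \<Longrightarrow> mcm rows' (insert i (Bset (I7_m l) (I7_A l) i)) \<noteq> mcm rows' (Bset (I7_m l) (I7_A l) i) + 1"
      proof -
        fix i assume i: "i \<in> N - {w}"
        then have i': "1 \<le> i" "i \<le> 5*l+3" "i \<notin> set (js @ [w])" using js(4) by auto
        have "distinct (js @ [w])" "set (js @ [w]) \<subseteq> {4*l+3..5*l+3}" using js w w3 by auto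
        from NR[OF this i'] show "mcm rows' (insert i (Bset (I7_m l) (I7_A l) i)) \<noteq> mcm rows' (Bset (I7_m l) (I7_A l) i) + 1"
          using rows' by simp
      qed
      then show ?thesis using step.hyps(6) by auto
    qed
    then have "N' = {1..5*l+3} - set (js @ [w])" using js(4) by auto
    moreover have "distinct (js @ [w])" "set (js @ [w]) \<subseteq> {4*l+3..5*l+3}" using js w w3 by auto
    ultimately show ?thesis using rows' by blast
  qed
qed

lemma reach_js: assumes "1 \<le> l" shows "distinct js \<Longrightarrow> set js \<subseteq> {4*l+3..5*l+3} \<Longrightarrow>
  umcd_reach (I7_m l) (I7_A l) ({1..5*l+3} - set js) (map (row l) js)"
proof (induction js rule: rev_induct)
  case Nil
  show ?case using umcd_reach.init[of "I7_m l" "I7_A l"] by (simp add: I7_m_def)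
next
  case (snoc x js)
  have d: "distinct js" "set js \<subseteq> {4*l+3..5*l+3}" "x \<notin> set js" "4*l+3 \<le> x" "x \<le> 5*l+3"
    using snoc.prems by auto
  let ?N = "{1..5*l+3} - set js"
  have IH: "umcd_reach (I7_m l) (I7_A l) ?N (map (row l) js)" using snoc.IH d(1,2) by blast
  have xN: "x \<in> ?N" using d by auto
  have mn: "\<forall>v\<in>?N. card (I7_A l x) \<le> card (I7_A l v)"
  proof
    fix v assume v: "v \<in> ?N"
    have cx: "card (I7_A l x) = 2" using card_A3[OF assms d(4,5)] .
    show "card (I7_A l x) \<le> card (I7_A l v)"
    proof (cases "v \<le> 4*l+2")
      case True
      then show ?thesis using cx card_A12[OF assms _ True] v by auto
    next
      case False
      then show ?thesis using cx card_A3[OF assms, of v] v by auto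
    qed
  qed
  let ?rows' = "map (row l) js @ [insert x (I7_A l x)]"
  let ?N' = "{i \<in> ?N - {x}. mcm ?rows' (insert i (Bset (I7_m l) (I7_A l) i)) \<noteq> mcm ?rows' (Bset (I7_m l) (I7_A l) i) + 1}"
  have r: "umcd_reach (I7_m l) (I7_A l) ?N' ?rows'"
    by (rule umcd_reach.step[OF IH _ xN mn refl refl]) (use xN in auto)
  have rw: "?rows' = map (row l) (js @ [x])" by (simp add: row_def)
  have "?N' = ?N - {x}"
  proof -
    have "\<And>i. i \<in> ?N - {x} \<Longrightarrow> mcm ?rows' (insert i (Bset (I7_m l) (I7_A l) i)) \<noteq> mcm ?rows' (Bset (I7_m l) (I7_A l) i) + 1"
    proof -
      fix i assume i: "i \<in> ?N - {x}"
      then have i': "1 \<le> i" "i \<le> 5*l+3" "i \<notin> set (js @ [x])" by auto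
      from NR[OF snoc.prems i'] show "mcm ?rows' (insert i (Bset (I7_m l) (I7_A l) i)) \<noteq> mcm ?rows' (Bset (I7_m l) (I7_A l) i) + 1"
        using rw by simp
    qed
    then show ?thesis by auto
  qed
  moreover have "?N - {x} = {1..5*l+3} - set (js @ [x])" by auto
  ultimately have e1: "?N' = {1..5*l+3} - set (js @ [x])" by (rule trans)
  have "umcd_reach (I7_m l) (I7_A l) ({1..5*l+3} - set (js @ [x])) ?rows'"
    by (subst e1[symmetric]) (rule r)
  then show ?case by (simp only: rw)
qed

theorem part1: assumes "1 \<le> l"
  shows "(\<exists>k. umcd_output (I7_m l) (I7_A l) k) \<and> (\<forall>k. umcd_output (I7_m l) (I7_A l) k \<longrightarrow> k = l+2)"
proof
  let ?js = "[4*l+3..<5*l+4]"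
  have sj: "set ?js = {4*l+3..5*l+3}" by auto
  have dj: "distinct ?js" by simp
  have R0: "umcd_reach (I7_m l) (I7_A l) ({1..5*l+3} - set ?js) (map (row l) ?js)"
    using reach_js[OF assms dj] sj by simp
  let ?N = "{1..5*l+3} - set ?js"
  have N: "?N = {1..4*l+2}" using sj by auto
  have "finite ?N" "?N \<noteq> {}" using N by auto
  from ex_is_arg_min_if_finite[OF this, of "\<lambda>v. card (I7_A l v)"] obtain w where
    "is_arg_min (\<lambda>v. card (I7_A l v)) (\<lambda>x. x \<in> ?N) w" by blast
  then have wN: "w \<in> ?N" and nl: "\<not>(\<exists>y. y \<in> ?N \<and> card (I7_A l y) < card (I7_A l w))"
    unfolding is_arg_min_def by blast+
  have mn: "\<forall>v\<in>?N. card (I7_A l w) \<le> card (I7_A l v)" using nl by (meson not_le)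
  let ?rows' = "map (row l) ?js @ [insert w (I7_A l w)]"
  let ?N' = "{i \<in> ?N - {w}. mcm ?rows' (insert i (Bset (I7_m l) (I7_A l) i)) \<noteq> mcm ?rows' (Bset (I7_m l) (I7_A l) i) + 1}"
  have r: "umcd_reach (I7_m l) (I7_A l) ?N' ?rows'"
    by (rule umcd_reach.step[OF R0 _ wN mn refl refl]) (use wN in blast)
  have rw: "?rows' = map (row l) ?js @ [row l w]" by (simp add: row_def)
  have w: "1 \<le> w" "w \<le> 4*l+2" using wN unfolding N by auto
  have "?N' = {}"
  proof -
    have "\<And>i. i \<in> ?N - {w} \<Longrightarrow> mcm ?rows' (insert i (Bset (I7_m l) (I7_A l) i)) = mcm ?rows' (Bset (I7_m l) (I7_A l) i) + 1"
    proof -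
      fix i assume i: "i \<in> ?N - {w}"
      then have i': "1 \<le> i" "i \<le> 4*l+2" "i \<noteq> w" using N by auto
      show "mcm ?rows' (insert i (Bset (I7_m l) (I7_A l) i)) = mcm ?rows' (Bset (I7_m l) (I7_A l) i) + 1"
        using RM[OF dj sj i'(1,2) w i'(3)] rw by simp
    qed
    then show ?thesis by auto
  qed
  then have "umcd_reach (I7_m l) (I7_A l) {} ?rows'" using r by (simp only:)
  then show "\<exists>k. umcd_output (I7_m l) (I7_A l) k" unfolding umcd_output_def by blast
next
  show "\<forall>k. umcd_output (I7_m l) (I7_A l) k \<longrightarrow> k = l+2"
  proof (intro allI impI)
    fix k assume "umcd_output (I7_m l) (I7_A l) k"
    then obtain rows where r: "umcd_reach (I7_m l) (I7_A l) {} rows" "k = length rows"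
      unfolding umcd_output_def by blast
    from inv_reach[OF r(1) assms] show "k = l+2"
    proof
      assume "\<exists>js. distinct js \<and> set js \<subseteq> {4*l+3..5*l+3} \<and> rows = map (row l) js \<and> {} = {1..5*l+3} - set js"
      then obtain js where sub: "set js \<subseteq> {4*l+3..5*l+3}" and eq: "{} = {1..5*l+3} - set js" by blast
      have "(1::nat) \<in> {1..5*l+3}" by simp
      then have "1 \<in> set js" using eq by blast
      then have "1 \<in> {4*l+3..5*l+3}" using sub by blast
      then show ?thesis by simp
    next
      assume "{} = {} \<and> length rows = l+2"
      then show ?thesis using r(2) by simp
    qed
  qed
qed

lemma LB: assumes l1: "1 \<le> l" and fR: "field R" and fin: "finite (carrier R)" and t1: "1 \<le> t"
  and code: "is_index_code R (I7_m l) (I7_A l) t r \<phi>"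
  shows "(l+2)*t \<le> r"
proof -
  interpret F: field R by (rule fR)
  let ?m = "5*l+3"
  have m: "I7_m l = ?m" by (simp add: I7_m_def)
  let ?M = "messages R (I7_m l) t"
  have dec: "\<And>j x y. j \<in> {1..?m} \<Longrightarrow> x \<in> ?M \<Longrightarrow> y \<in> ?M \<Longrightarrow> \<phi> x = \<phi> y \<Longrightarrow>
     restrict x (I7_A l j) = restrict y (I7_A l j) \<Longrightarrow> x j = y j"
  proof -
    fix j x y assume j: "j \<in> {1..?m}" and x: "x \<in> ?M" and y: "y \<in> ?M" and e: "\<phi> x = \<phi> y"
      and r: "restrict x (I7_A l j) = restrict y (I7_A l j)"
    from code j obtain \<psi> where \<psi>: "\<forall>x\<in>?M. \<psi> (\<phi> x) (restrict x (I7_A l j)) = x j"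
      unfolding is_index_code_def m by blast
    show "x j = y j" using \<psi> x y e r by metis
  qed
  define T where "T = PiE {..<t} (\<lambda>_. carrier R)"
  define z where "z = (\<lambda>k\<in>{..<t}. \<zero>\<^bsub>R\<^esub>)"
  have zT: "z \<in> T" unfolding T_def z_def by auto
  define S where "S = insert 2 {4*l+3..5*l+3}"
  define X where "X = PiE {1..?m} (\<lambda>c. if c \<in> S then T else {z})"
  have M: "?M = PiE {1..?m} (\<lambda>_. T)" unfolding messages_def T_def m ..
  have XM: "X \<subseteq> ?M" unfolding M X_def by (rule PiE_mono) (use zT in auto)
  have out: "\<And>x c. x \<in> X \<Longrightarrow> c \<in> {1..?m} \<Longrightarrow> c \<notin> S \<Longrightarrow> x c = z"
    unfolding X_def by (drule PiE_mem) auto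
  have inj: "inj_on \<phi> X"
  proof (rule inj_onI)
    fix x y assume x: "x \<in> X" and y: "y \<in> X" and e: "\<phi> x = \<phi> y"
    have xM: "x \<in> ?M" and yM: "y \<in> ?M" using x y XM by auto
    have ag_out: "\<And>c. c \<in> {1..?m} \<Longrightarrow> c \<notin> S \<Longrightarrow> x c = y c" using out x y by simp
    have ag3: "\<And>j. j \<in> {4*l+3..5*l+3} \<Longrightarrow> x j = y j"
    proof -
      fix j assume j: "j \<in> {4*l+3..5*l+3}"
      then have j3: "4*l+3 \<le> j" "j \<le> 5*l+3" by auto
      have "\<And>c. c \<in> I7_A l j \<Longrightarrow> x c = y c"
      proof -
        fix c assume "c \<in> I7_A l j"
        then have "c = aa l j \<or> c = bb l j" using A_L3[OF j3] by auto
        then have "c \<in> {1..?m}" "c \<notin> S"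
          using aa_props[OF j3] bb_props[OF j3] l1 unfolding S_def by auto
        then show "x c = y c" by (rule ag_out)
      qed
      then have "restrict x (I7_A l j) = restrict y (I7_A l j)" by (rule restrict_ext)
      then show "x j = y j" using dec[OF _ xM yM e] j by auto
    qed
    have ag2: "x 2 = y 2"
    proof -
      have "\<And>c. c \<in> I7_A l 2 \<Longrightarrow> x c = y c"
      proof -
        fix c assume c: "c \<in> I7_A l 2"
        have c1: "c \<in> {1..?m}" using c A_sub[of l 2] by auto
        have "c \<noteq> 2" using c A_eL1[of 2 l c] l1 by auto
        then show "x c = y c" using ag3 ag_out[OF c1] unfolding S_def by auto
      qed
      then have "restrict x (I7_A l 2) = restrict y (I7_A l 2)" by (rule restrict_ext)
      then show "x 2 = y 2" using dec[OF _ xM yM e] l1 by auto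
    qed
    show "x = y"
    proof (rule PiE_ext[OF xM[unfolded M] yM[unfolded M]])
      fix c assume c: "c \<in> {1..?m}"
      show "x c = y c"
      proof (cases "c \<in> S")
        case True then show ?thesis using ag2 ag3 unfolding S_def by auto
      next
        case False then show ?thesis using ag_out c by auto
      qed
    qed
  qed
  let ?q = "card (carrier R)"
  have q2: "2 \<le> ?q"
  proof -
    have "{\<zero>\<^bsub>R\<^esub>, \<one>\<^bsub>R\<^esub>} \<subseteq> carrier R" by auto
    then have "card {\<zero>\<^bsub>R\<^esub>, \<one>\<^bsub>R\<^esub>} \<le> ?q" by (rule card_mono[OF fin])
    then show ?thesis using F.one_not_zero by simp
  qed
  have cT: "card T = ?q ^ t" unfolding T_def by (simp add: card_PiE)
  have cS: "card S = l+2" unfolding S_def using l1 by simp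
  have SM: "S \<subseteq> {1..?m}" unfolding S_def using l1 by auto
  have "card X = (\<Prod>c\<in>{1..?m}. card (if c \<in> S then T else {z}))" unfolding X_def by (simp add: card_PiE)
  also have "\<dots> = (\<Prod>c\<in>{1..?m}. if c \<in> S then card T else 1)" by (rule prod.cong) auto
  also have "\<dots> = card T ^ card S"
    using SM by (simp add: prod.If_cases Int_absorb1)
  finally have cX: "card X = ?q ^ (t*(l+2))" unfolding cT cS by (simp only: power_mult)
  have img: "\<phi> ` X \<subseteq> codewords R r" using code XM unfolding is_index_code_def by auto
  have fc: "finite (codewords R r)" unfolding codewords_def using fin by (simp add: finite_PiE)
  have "card X \<le> card (codewords R r)" by (rule card_inj_on_le[OF inj img fc])
  also have "\<dots> = ?q ^ r" unfolding codewords_def by (simp add: card_PiE)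
  finally have "?q ^ (t*(l+2)) \<le> ?q ^ r" using cX by simp
  then have "t*(l+2) \<le> r" by (rule power_le_imp_le_exp[rotated]) (use q2 in simp)
  then show ?thesis by (simp add: mult.commute)
qed

lemma partner: assumes "1 \<le> i" "i \<le> 4*l+2" "c \<in> B l i" "c \<noteq> pp l i"
  shows "(odd c \<and> 1 \<le> c \<and> c \<le> 2*l+1 \<and> c+2*l+1 \<in> I7_A l i) \<or>
         (even c \<and> 2*l+2 \<le> c \<and> c \<le> 4*l+2 \<and> c-(2*l+1) \<in> I7_A l i)"
proof -
  from L12_cases[OF assms(1,2)] show ?thesis
  proof cases
    case 1 then show ?thesis using assms B_oL1[of i l c] A_oL1[of i l "c+2*l+1"] pp_simps(1)[of i l] by auto
  next
    case 2 then show ?thesis using assms B_eL1[of i l c] A_eL1[of i l "c-(2*l+1)"] by auto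
  next
    case 3 then show ?thesis using assms B_eL2[of i l c] A_eL2[of i l "c-(2*l+1)"] pp_simps(3)[of i l] by auto
  next
    case 4 then show ?thesis using assms B_oL2[of i l c] A_oL2[of i l "c+2*l+1"] by auto
  qed
qed

lemma bit_cancel: "(p::nat) \<le> 1 \<Longrightarrow> q \<le> 1 \<Longrightarrow> (p + s) mod 2 = (q + s) mod 2 \<Longrightarrow> p = q"
  by presburger

lemma sum_cancel:
  assumes "finite SS" "d \<in> SS" "\<And>c. c \<in> SS - {d} \<Longrightarrow> X c = Y c" "(X d::nat) \<le> 1" "Y d \<le> 1"
    "(\<Sum>c\<in>SS. X c) mod 2 = (\<Sum>c\<in>SS. Y c) mod 2"
  shows "X d = Y d"
proof -
  have "(\<Sum>c\<in>SS. X c) = X d + (\<Sum>c\<in>SS-{d}. X c)" by (rule sum.remove[OF assms(1,2)])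
  moreover have "(\<Sum>c\<in>SS. Y c) = Y d + (\<Sum>c\<in>SS-{d}. Y c)" by (rule sum.remove[OF assms(1,2)])
  moreover have "(\<Sum>c\<in>SS-{d}. X c) = (\<Sum>c\<in>SS-{d}. Y c)" by (rule sum.cong) (use assms(3) in auto)
  ultimately show ?thesis using assms(4-6) bit_cancel by metis
qed

lemma exists_decoder:
  assumes "\<And>x y. x \<in> M \<Longrightarrow> y \<in> M \<Longrightarrow> \<phi> x = \<phi> y \<Longrightarrow> restrict x Ai = restrict y Ai \<Longrightarrow> x i = y i"
  shows "\<exists>\<psi>. \<forall>x\<in>M. \<psi> (\<phi> x) (restrict x Ai) = x i"
proof -
  define \<psi> where "\<psi> = (\<lambda>cw r. SOME v. \<exists>x\<in>M. \<phi> x = cw \<and> restrict x Ai = r \<and> x i = v)"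
  have "\<forall>x\<in>M. \<psi> (\<phi> x) (restrict x Ai) = x i"
  proof
    fix x assume x: "x \<in> M"
    have "\<exists>v. \<exists>x'\<in>M. \<phi> x' = \<phi> x \<and> restrict x' Ai = restrict x Ai \<and> x' i = v" using x by blast
    then have "\<exists>x'\<in>M. \<phi> x' = \<phi> x \<and> restrict x' Ai = restrict x Ai \<and> x' i = \<psi> (\<phi> x) (restrict x Ai)"
      unfolding \<psi>_def by (rule someI_ex)
    then show "\<psi> (\<phi> x) (restrict x Ai) = x i" using assms x by metis
  qed
  then show ?thesis by blast
qed


lemma L3_in_A: assumes "1 \<le> i" "i \<le> 4*l+2" "4*l+3 \<le> j" "j \<le> 5*l+3" shows "j \<in> I7_A l i"
proof -
  from L12_cases[OF assms(1,2)] show ?thesis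
  proof cases
    case 1 then show ?thesis using assms A_oL1[of i l j] by auto
  next
    case 2 then show ?thesis using assms A_eL1[of i l j] by auto
  next
    case 3 then show ?thesis using assms A_eL2[of i l j] by auto
  next
    case 4 then show ?thesis using assms A_oL2[of i l j] by auto
  qed
qed

definition SS :: "nat \<Rightarrow> nat set" where
  "SS l = {c. 1 \<le> c \<and> c \<le> 4*l+2 \<and> (c \<le> 2*l+1 \<or> odd c)}"

lemma SS_fin: "finite (SS l)"
  by (rule finite_subset[of _ "{1..4*l+2}"]) (auto simp: SS_def)

definition enc :: "nat \<Rightarrow> (nat \<Rightarrow> nat \<Rightarrow> nat) \<Rightarrow> nat \<Rightarrow> nat" where
  "enc l x = (\<lambda>k\<in>{..<l+2}. if k < l+1
      then (x (4*l+3+k) 0 + x (aa l (4*l+3+k)) 0 + x (bb l (4*l+3+k)) 0) mod 2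
      else (\<Sum>c\<in>SS l. x c 0) mod 2)"

lemma main_dec:
  fixes X Y :: "nat \<Rightarrow> nat"
  assumes l1: "1 \<le> l" and i: "1 \<le> i" "i \<le> 5*l+3"
    and bits: "\<And>c. 1 \<le> c \<Longrightarrow> c \<le> 5*l+3 \<Longrightarrow> X c \<le> 1 \<and> Y c \<le> 1"
    and e3: "\<And>j. 4*l+3 \<le> j \<Longrightarrow> j \<le> 5*l+3 \<Longrightarrow> (X j + X (aa l j) + X (bb l j)) mod 2 = (Y j + Y (aa l j) + Y (bb l j)) mod 2"
    and eS: "(\<Sum>c\<in>SS l. X c) mod 2 = (\<Sum>c\<in>SS l. Y c) mod 2"
    and kn: "\<And>c. c \<in> I7_A l i \<Longrightarrow> X c = Y c"
  shows "X i = Y i"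
proof (cases "i \<le> 4*l+2")
  case False
  then have i3: "4*l+3 \<le> i" by simp
  have "X (aa l i) = Y (aa l i)" "X (bb l i) = Y (bb l i)" using kn A_L3[OF i3 i(2)] by auto
  then have "(X i + (X (aa l i) + X (bb l i))) mod 2 = (Y i + (X (aa l i) + X (bb l i))) mod 2"
    using e3[OF i3 i(2)] by (simp add: add.assoc)
  then show ?thesis using bit_cancel bits[OF i] by blast
next
  case True
  note i4 = True
  have pair: "\<And>j. 4*l+3 \<le> j \<Longrightarrow> j \<le> 5*l+3 \<Longrightarrow> (X (aa l j) = Y (aa l j) \<longleftrightarrow> X (bb l j) = Y (bb l j))"
  proof -
    fix j assume j: "4*l+3 \<le> j" "j \<le> 5*l+3"
    have Xj: "X j = Y j" using kn L3_in_A[OF i(1) i4 j] by simp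
    note ap = aa_props[OF j] and bp = bb_props[OF j]
    have ba: "X (aa l j) \<le> 1" "Y (aa l j) \<le> 1" "X (bb l j) \<le> 1" "Y (bb l j) \<le> 1"
      using bits[of "aa l j"] bits[of "bb l j"] ap bp by auto
    have e: "(X j + X (aa l j) + X (bb l j)) mod 2 = (X j + Y (aa l j) + Y (bb l j)) mod 2"
      using e3[OF j] Xj by simp
    show "X (aa l j) = Y (aa l j) \<longleftrightarrow> X (bb l j) = Y (bb l j)"
    proof
      assume h: "X (aa l j) = Y (aa l j)"
      have "(X (bb l j) + (X j + X (aa l j))) mod 2 = (Y (bb l j) + (X j + X (aa l j))) mod 2"
        using e h by (simp add: ac_simps)
      then show "X (bb l j) = Y (bb l j)" using bit_cancel ba by blast
    next
      assume h: "X (bb l j) = Y (bb l j)"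
      have "(X (aa l j) + (X j + X (bb l j))) mod 2 = (Y (aa l j) + (X j + X (bb l j))) mod 2"
        using e h by (simp add: ac_simps)
      then show "X (aa l j) = Y (aa l j)" using bit_cancel ba by blast
    qed
  qed
  have agree: "\<And>c. 1 \<le> c \<Longrightarrow> c \<le> 5*l+3 \<Longrightarrow> c \<noteq> i \<Longrightarrow> c \<noteq> pp l i \<Longrightarrow> X c = Y c"
  proof -
    fix c assume c: "1 \<le> c" "c \<le> 5*l+3" "c \<noteq> i" "c \<noteq> pp l i"
    show "X c = Y c"
    proof (cases "c \<in> I7_A l i")
      case True then show ?thesis using kn by simp
    next
      case False
      then have cB: "c \<in> B l i" using c unfolding Bset_def I7_m_def by auto
      from partner[OF i(1) i4 cB c(4)] show ?thesis
      proof
        assume h: "odd c \<and> 1 \<le> c \<and> c \<le> 2*l+1 \<and> c+2*l+1 \<in> I7_A l i"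
        define j where "j = (c - 1) div 2 + (4*l+3)"
        have j3: "4*l+3 \<le> j" "j \<le> 5*l+3" unfolding j_def using h by auto
        have a: "aa l j = c" using aa_eq[OF j3(1)] h unfolding j_def by simp
        have b: "bb l j = c+2*l+1" using bb_props[OF j3] a by simp
        show ?thesis using pair[OF j3] kn[of "c+2*l+1"] h a b by simp
      next
        assume h: "even c \<and> 2*l+2 \<le> c \<and> c \<le> 4*l+2 \<and> c-(2*l+1) \<in> I7_A l i"
        define j where "j = (c - (2*l+2)) div 2 + (4*l+3)"
        have j3: "4*l+3 \<le> j" "j \<le> 5*l+3" unfolding j_def using h by auto
        have b: "bb l j = c" using bb_eq[OF j3(1)] h unfolding j_def by auto
        have a: "aa l j = c-(2*l+1)" using bb_props[OF j3] b by simp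
        show ?thesis using pair[OF j3] kn[of "c-(2*l+1)"] h a b by simp
      qed
    qed
  qed
  have SSr: "\<And>c. c \<in> SS l \<Longrightarrow> 1 \<le> c \<and> c \<le> 5*l+3" unfolding SS_def by auto
  from L12_cases[OF i(1) i4] show ?thesis
  proof cases
    case 1
    have ppS: "pp l i \<notin> SS l" using 1 pp_simps(1)[of i l] unfolding SS_def by auto
    have iS: "i \<in> SS l" using 1 unfolding SS_def by auto
    show ?thesis
      by (rule sum_cancel[OF SS_fin iS _ _ _ eS]) (use agree SSr ppS bits i in auto)
  next
    case 2
    have pp: "pp l i = i" using 2 pp_simps(2)[of i l] by auto
    have iS: "i \<in> SS l" using 2 unfolding SS_def by auto
    show ?thesis
      by (rule sum_cancel[OF SS_fin iS _ _ _ eS]) (use agree SSr pp bits i in auto)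
  next
    case 4
    have pp: "pp l i = i" using 4 pp_simps(4)[of i l] by auto
    have iS: "i \<in> SS l" using 4 unfolding SS_def by auto
    show ?thesis
      by (rule sum_cancel[OF SS_fin iS _ _ _ eS]) (use agree SSr pp bits i in auto)
  next
    case 3
    have pp: "pp l i = i - (2*l+1)" using 3 pp_simps(3)[of i l] by auto
    have iS: "i \<notin> SS l" using 3 unfolding SS_def by auto
    have pS: "pp l i \<in> SS l" using 3 pp unfolding SS_def by auto
    have p1: "1 \<le> pp l i" "pp l i \<le> 5*l+3" using SSr[OF pS] by auto
    have Xp: "X (pp l i) = Y (pp l i)"
      by (rule sum_cancel[OF SS_fin pS _ _ _ eS]) (use agree SSr iS bits p1 in auto)
    define j where "j = (i - (2*l+2)) div 2 + (4*l+3)"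
    have j3: "4*l+3 \<le> j" "j \<le> 5*l+3" unfolding j_def using 3 by auto
    have b: "bb l j = i" using bb_eq[OF j3(1)] 3 unfolding j_def by auto
    have a: "aa l j = pp l i" using bb_props[OF j3] b pp by simp
    show ?thesis using pair[OF j3] Xp a b by simp
  qed
qed


lemma mod2_cases: "(n::nat) mod 2 = 0 \<or> n mod 2 = 1" by presburger

lemma code_ok: assumes l1: "1 \<le> l" shows "is_index_code GF2 (I7_m l) (I7_A l) 1 (l+2) (enc l)"
proof -
  let ?M = "messages GF2 (I7_m l) 1"
  have M: "?M = PiE {1..5*l+3} (\<lambda>_. PiE {..<1} (\<lambda>_. {0,1}))"
    unfolding messages_def I7_m_def by (simp add: GF2_def)
  have bitsM: "\<And>x c. x \<in> ?M \<Longrightarrow> 1 \<le> c \<Longrightarrow> c \<le> 5*l+3 \<Longrightarrow> x c 0 \<le> 1"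
  proof -
    fix x c assume x: "x \<in> ?M" and c: "1 \<le> c" "c \<le> 5*l+3"
    have "x c \<in> PiE {..<1} (\<lambda>_. {0::nat,1})" by (rule PiE_mem[OF x[unfolded M]]) (use c in simp)
    then have "x c 0 \<in> {0,1}" by (rule PiE_mem) simp
    then show "x c 0 \<le> 1" by auto
  qed
  have part1: "enc l \<in> ?M \<rightarrow> codewords GF2 (l+2)"
  proof
    fix x assume "x \<in> ?M"
    have "\<And>n::nat. n mod 2 \<in> {0,1}" using mod2_cases by auto
    then show "enc l x \<in> codewords GF2 (l+2)"
      unfolding enc_def codewords_def by (auto simp: GF2_def)
  qed
  have part2: "\<forall>i\<in>{1..I7_m l}. \<exists>\<psi>. \<forall>x\<in>?M. \<psi> (enc l x) (restrict x (I7_A l i)) = x i"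
  proof
    fix i assume i: "i \<in> {1..I7_m l}"
    then have i': "1 \<le> i" "i \<le> 5*l+3" by (auto simp: I7_m_def)
    show "\<exists>\<psi>. \<forall>x\<in>?M. \<psi> (enc l x) (restrict x (I7_A l i)) = x i"
    proof (rule exists_decoder)
      fix x y assume x: "x \<in> ?M" and y: "y \<in> ?M" and e: "enc l x = enc l y"
        and r: "restrict x (I7_A l i) = restrict y (I7_A l i)"
      have bits: "\<And>c. 1 \<le> c \<Longrightarrow> c \<le> 5*l+3 \<Longrightarrow> x c 0 \<le> 1 \<and> y c 0 \<le> 1"
        using bitsM x y by blast
      have e3: "\<And>j. 4*l+3 \<le> j \<Longrightarrow> j \<le> 5*l+3 \<Longrightarrow>
          (x j 0 + x (aa l j) 0 + x (bb l j) 0) mod 2 = (y j 0 + y (aa l j) 0 + y (bb l j) 0) mod 2"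
      proof -
        fix j assume j: "4*l+3 \<le> j" "j \<le> 5*l+3"
        define k where "k = j - (4*l+3)"
        have k: "k < l+1" "4*l+3+k = j" using j unfolding k_def by auto
        have "enc l x k = enc l y k" using e by simp
        then show "(x j 0 + x (aa l j) 0 + x (bb l j) 0) mod 2 = (y j 0 + y (aa l j) 0 + y (bb l j) 0) mod 2"
          using k unfolding enc_def by simp
      qed
      have eS: "(\<Sum>c\<in>SS l. x c 0) mod 2 = (\<Sum>c\<in>SS l. y c 0) mod 2"
      proof -
        have "enc l x (l+1) = enc l y (l+1)" using e by simp
        then show ?thesis unfolding enc_def by simp
      qed
      have kn: "\<And>c. c \<in> I7_A l i \<Longrightarrow> x c 0 = y c 0"
      proof -
        fix c assume c: "c \<in> I7_A l i"
        have "restrict x (I7_A l i) c = restrict y (I7_A l i) c" using r by simp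
        then show "x c 0 = y c 0" using c by simp
      qed
      have xi: "x i 0 = y i 0"
        by (rule main_dec[OF l1 i' bits e3 eS kn])
      have "x i \<in> PiE {..<1} (\<lambda>_. {0::nat,1})" by (rule PiE_mem[OF x[unfolded M]]) (use i' in simp)
      moreover have "y i \<in> PiE {..<1} (\<lambda>_. {0::nat,1})" by (rule PiE_mem[OF y[unfolded M]]) (use i' in simp)
      ultimately
      show "x i = y i"
        by (rule PiE_ext) (use xi in auto)
    qed
  qed
  show ?thesis unfolding is_index_code_def using part1 part2 by blast
qed

lemma beta_val: assumes l1: "1 \<le> l" shows "beta (I7_m l) (I7_A l) = real (l+2)"
  unfolding beta_def
proof (rule cInf_eq_minimum)
  have "is_index_code GF2 (I7_m l) (I7_A l) 1 (l+2) (enc l)" by (rule code_ok[OF l1])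
  moreover have "finite (carrier GF2)" by (simp add: GF2_def)
  ultimately have "real (l+2) / real (1::nat) \<in> {real r / real t |r t. \<exists>(R::nat ring) \<phi>.
      field R \<and> finite (carrier R) \<and> t \<ge> 1 \<and> is_index_code R (I7_m l) (I7_A l) t r \<phi>}"
    using GF2_field by blast
  then show "real (l+2) \<in> {real r / real t |r t. \<exists>(R::nat ring) \<phi>.
      field R \<and> finite (carrier R) \<and> t \<ge> 1 \<and> is_index_code R (I7_m l) (I7_A l) t r \<phi>}" by simp
next
  fix x assume "x \<in> {real r / real t |r t. \<exists>(R::nat ring) \<phi>.
      field R \<and> finite (carrier R) \<and> t \<ge> 1 \<and> is_index_code R (I7_m l) (I7_A l) t r \<phi>}"
  then obtain r t R \<phi> where x: "x = real r / real t" and h: "field R" "finite (carrier R)" "(1::nat) \<le> t"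
    "is_index_code R (I7_m l) (I7_A l) t r \<phi>" by blast
  have "(l+2)*t \<le> r" by (rule LB[OF l1 h])
  then have "real (l+2) * real t \<le> real r" by (metis of_nat_le_iff of_nat_mult)
  moreover have "real t > 0" using h(3) by simp
  ultimately show "real (l+2) \<le> x" unfolding x by (simp add: le_divide_eq)
qed

theorem proposition11:
  fixes l :: nat
  assumes "l \<ge> 1"
  shows "(\<exists>k. umcd_output (I7_m l) (I7_A l) k) \<and>
         (\<forall>k. umcd_output (I7_m l) (I7_A l) k \<longrightarrow> beta (I7_m l) (I7_A l) = real k)"
  using part1[OF assms] beta_val[OF assms] by auto

end
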